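(* Let $n\ge 3$ and $\zeta_n=e^{2\pi i/n}$. If $n$ is prime, then $R(U_n)=\mathbb{Z}[\zeta_n]$. If $n$ is not prime, then $R(U_n)=\mathbb{Z}[1/n,\zeta_n]$.
   Context: Let $\mathbf{T}=\{z\in\mathbb{C}:|z|=1\}$. An angle is an element of the quotient group $\mathbf{T}/\{\pm1\}$; in formulas an angle is represented by either of its two representatives $u\in\mathbf{T}$. For $p\in\mathbb{C}$ and an angle $u$, let $L_u(p)=\{p+ru: r\in\mathbb{R}\}$. For distinct angles $u,v$ and $p,q\in\mathbb{C}$, $I_{u,v}(p,q)$ denotes the unique point of $L_u(p)\cap L_v(q)$. For a subgroup $U$ of $\mathbf{T}/\{\pm1\}$, $R(U)$ denotes the smallest subset of $\mathbb{C}$ that contains $0$ and $1$ and such that $I_{u,v}(p,q)\in R(U)$ whenever $p,q\in R(U)$ and $u,v$ are distinct elements of $U$. For $n\ge 3$, $U_n$ denotes the cyclic subgroup of $\mathbf{T}/\{\pm1\}$ of order $n$ generated by the class of $e^{i\pi/n}$ (i.e. the angles $k\pi/n$, $0\le k<n$). $\mathbb{Z}[1/n,\zeta_n]$ is the subring of $\mathbb{C}$ generated by $1/n$ and $\zeta_n$. *)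

theory Defs
  imports "HOL-Analysis.Analysis" "HOL-Computational_Algebra.Primes"
begin

text \<open>The unit circle T, and angles = elements of T/{+-1}, represented as the
  equivalence class {u, -u} of a representative u.\<close>
definition circle :: "complex set" where
  "circle = {z. cmod z = 1}"

definition angle_of :: "complex \<Rightarrow> complex set" where
  "angle_of u = {u, -u}"

definition angles :: "complex set set" where
  "angles = angle_of ` circle"

definition line :: "complex \<Rightarrow> complex \<Rightarrow> complex set" where
  "line u p = {p + complex_of_real r * u | r. True}"

text \<open>For distinct angles the two lines meet in exactly one point, so membership
  in the intersection is the point I_{u,v}(p,q).\<close>
inductive_set Rset :: "complex set set \<Rightarrow> complex set" for U :: "complex set set" where
  zero: "0 \<in> Rset U"
| one: "1 \<in> Rset U"
| inter: "\<lbrakk> p \<in> Rset U; q \<in> Rset U; A \<in> U; B \<in> U; A \<noteq> B; u \<in> A; v \<in> B;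
            z \<in> line u p \<inter> line v q \<rbrakk> \<Longrightarrow> z \<in> Rset U"

text \<open>U_n: the cyclic subgroup of order n generated by the class of exp(i pi/n).\<close>
definition U_n :: "nat \<Rightarrow> complex set set" where
  "U_n n = {angle_of (exp (\<i> * complex_of_real (real k * pi / real n))) | k. k < n}"

inductive_set subring_gen :: "complex set \<Rightarrow> complex set" for S :: "complex set" where
  gen: "x \<in> S \<Longrightarrow> x \<in> subring_gen S"
| zero: "0 \<in> subring_gen S"
| one: "1 \<in> subring_gen S"
| add: "\<lbrakk> x \<in> subring_gen S; y \<in> subring_gen S \<rbrakk> \<Longrightarrow> x + y \<in> subring_gen S"
| neg: "x \<in> subring_gen S \<Longrightarrow> - x \<in> subring_gen S"
| mult: "\<lbrakk> x \<in> subring_gen S; y \<in> subring_gen S \<rbrakk> \<Longrightarrow> x * y \<in> subring_gen S"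

definition zeta :: "nat \<Rightarrow> complex" where
  "zeta n = exp (2 * pi * \<i> / of_nat n)"

end

theory Submission
  imports Defs "HOL-Computational_Algebra.Polynomial"
begin


definition om :: "nat \<Rightarrow> complex" where "om n = exp (\<i> * of_real (pi / real n))"

lemma om_pow: "om n ^ k = exp (\<i> * of_real (real k * pi / real n))"
  unfolding om_def by (simp add: exp_of_nat_mult[symmetric] algebra_simps)

lemma norm_om_pow[simp]: "cmod (om n ^ k) = 1"
  by (simp add: norm_power om_def)

lemma zeta_pow: "zeta n ^ j = exp(2 * of_real pi * \<i> * of_nat j / of_nat n)"
  unfolding zeta_def by (simp add: exp_of_nat_mult[symmetric] algebra_simps)

lemma om_sq: "om n ^ 2 = zeta n"
  unfolding zeta_def om_def by (simp add: exp_of_nat_mult[symmetric] algebra_simps)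

lemma om_pow_sq: "(om n ^ j) ^ 2 = zeta n ^ j"
  by (simp add: power_mult[symmetric] mult.commute[of j] power_mult om_sq)

lemma zeta_pow_eq_iff: "n \<ge> 1 \<Longrightarrow> zeta n ^ j = zeta n ^ k \<longleftrightarrow> j mod n = k mod n"
  unfolding zeta_pow by (rule complex_root_unity_eq)

lemma zeta_pow_eq_1_iff: "n \<ge> 1 \<Longrightarrow> zeta n ^ j = 1 \<longleftrightarrow> n dvd j"
  unfolding zeta_pow by (rule complex_root_unity_eq_1)

lemma om_n: "n \<ge> 1 \<Longrightarrow> om n ^ n = -1"
  unfolding om_pow by simp

lemma unit_cnj: "cmod u = 1 \<Longrightarrow> cnj u = inverse u"
  by (metis complex_norm_square inverse_unique mult.commute norm_eq_zero of_real_1 one_power2 zero_neq_one)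

lemma line_neg: "line (-u) p = line u p"
  unfolding line_def by (auto, metis mult_minus_left of_real_minus, metis mult_minus_right of_real_minus minus_minus mult_minus_left)

lemma om_pow_mod: "n \<ge> 1 \<Longrightarrow> om n ^ j = om n ^ (j mod n) \<or> om n ^ j = - (om n ^ (j mod n))"
proof -
  assume n: "n \<ge> 1"
  have "om n ^ j = om n ^ (j mod n) * (om n ^ n) ^ (j div n)"
    by (metis div_mult_mod_eq power_add power_mult add.commute mult.commute)
  also have "\<dots> = om n ^ (j mod n) * (-1) ^ (j div n)" using om_n[OF n] by simp
  finally show ?thesis by (cases "even (j div n)") auto
qed

lemma angle_in_U: "k < n \<Longrightarrow> angle_of (om n ^ k) \<in> U_n n"
  unfolding U_n_def om_pow by auto

lemma R_inter:
  assumes n: "n \<ge> 1" and p: "p \<in> Rset (U_n n)" and q: "q \<in> Rset (U_n n)"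
    and jk: "zeta n ^ j \<noteq> zeta n ^ k"
    and zp: "z \<in> line (om n ^ j) p" and zq: "z \<in> line (om n ^ k) q"
  shows "z \<in> Rset (U_n n)"
proof -
  define j' where "j' = j mod n"
  define k' where "k' = k mod n"
  have j'n: "j' < n" "k' < n" using n by (auto simp: j'_def k'_def)
  have lj: "line (om n ^ j) p = line (om n ^ j') p"
    using om_pow_mod[OF n, of j] line_neg j'_def by metis
  have lk: "line (om n ^ k) q = line (om n ^ k') q"
    using om_pow_mod[OF n, of k] line_neg k'_def by metis
  have sq: "zeta n ^ j = zeta n ^ j'" "zeta n ^ k = zeta n ^ k'"
    using zeta_pow_eq_iff[OF n] by (auto simp: j'_def k'_def)
  have AB: "angle_of (om n ^ j') \<noteq> angle_of (om n ^ k')"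
  proof
    assume "angle_of (om n ^ j') = angle_of (om n ^ k')"
    then have "om n ^ j' = om n ^ k' \<or> om n ^ j' = - (om n ^ k')"
      unfolding angle_of_def by blast
    then have "(om n ^ j') ^ 2 = (om n ^ k') ^ 2" by auto
    then show False using jk sq by (simp add: om_pow_sq)
  qed
  show ?thesis
    apply (rule Rset.inter[OF p q angle_in_U[OF j'n(1)] angle_in_U[OF j'n(2)] AB, where u = "om n ^ j'" and v = "om n ^ k'"])
      apply (simp add: angle_of_def)
     apply (simp add: angle_of_def)
    using zp zq lj lk by auto
qed

lemma R_induct[consumes 2, case_names zero one inter]:
  assumes x: "x \<in> Rset (U_n n)" and n: "n \<ge> 1"
    and P0: "P 0" and P1: "P 1"
    and PI: "\<And>p q j k z. p \<in> Rset (U_n n) \<Longrightarrow> P p \<Longrightarrow> q \<in> Rset (U_n n) \<Longrightarrow> P q \<Longrightarrow>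
       j < n \<Longrightarrow> k < n \<Longrightarrow> zeta n ^ j \<noteq> zeta n ^ k \<Longrightarrow>
       z \<in> line (om n ^ j) p \<Longrightarrow> z \<in> line (om n ^ k) q \<Longrightarrow> P z"
  shows "P x"
  using x
proof (induction rule: Rset.induct)
  case zero then show ?case by (rule P0)
next
  case one then show ?case by (rule P1)
next
  case (inter p q A B u v z)
  obtain j where j: "j < n" "A = angle_of (om n ^ j)"
    using \<open>A \<in> U_n n\<close> unfolding U_n_def om_pow[symmetric] by blast
  obtain k where k: "k < n" "B = angle_of (om n ^ k)"
    using \<open>B \<in> U_n n\<close> unfolding U_n_def om_pow[symmetric] by blast
  have lu: "line u p = line (om n ^ j) p"
    using \<open>u \<in> A\<close> j(2) line_neg unfolding angle_of_def by auto
  have lv: "line v q = line (om n ^ k) q"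
    using \<open>v \<in> B\<close> k(2) line_neg unfolding angle_of_def by auto
  have "j \<noteq> k" using \<open>A \<noteq> B\<close> j k by auto
  then have "zeta n ^ j \<noteq> zeta n ^ k" using zeta_pow_eq_iff[OF n] j k by simp
  then show ?case using PI[OF \<open>p \<in> Rset (U_n n)\<close> inter.IH(1) \<open>q \<in> Rset (U_n n)\<close> inter.IH(2) j(1) k(1)]
      \<open>z \<in> line u p \<inter> line v q\<close> lu lv by auto
qed


lemma cnj_aux:
  fixes a b c w :: complex
  assumes a0: "a \<noteq> 0" and b0: "b \<noteq> 0" and d: "a^2 \<noteq> b^2"
  shows "inverse a * (c - inverse b ^ 2 * w) / (inverse a ^ 2 - inverse b ^ 2) = a * (w - b^2*c)/(a^2-b^2)"
proof -
  have e: "inverse a ^ 2 - inverse b ^ 2 = (b^2 - a^2)/(a^2*b^2)"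
    using a0 b0 by (simp add: field_simps)
  have e2: "c - inverse b ^ 2 * w = (b^2*c - w)/b^2" using b0 by (simp add: field_simps)
  have d': "b^2 - a^2 \<noteq> 0" using d by simp
  show ?thesis unfolding e e2 using a0 b0 d d'
    by (simp add: divide_simps) (simp add: algebra_simps power2_eq_square)
qed

lemma F_eq_q:
  fixes a b p q :: complex
  assumes d: "a^2 \<noteq> b^2"
  shows "p + a^2 * ((q - p) - b^2 * c) / (a^2 - b^2) = q + b * (b * ((q-p) - a^2 * c) / (a^2 - b^2))"
proof -
  have d': "a^2 - b^2 \<noteq> 0" using d by simp
  show ?thesis using d' by (simp add: divide_simps) (simp add: algebra_simps power2_eq_square)
qed

lemma F_eq_p:
  fixes a b p q :: complex
  assumes d: "a^2 \<noteq> b^2"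
  shows "p + a^2 * ((q - p) - b^2 * c) / (a^2 - b^2) = p + a * (a * ((q-p) - b^2 * c) / (a^2 - b^2))"
  by (simp add: power2_eq_square)

lemma uniq_aux:
  fixes a b p r s :: complex
  assumes a0: "a \<noteq> 0" and b0: "b \<noteq> 0" and d: "a^2 \<noteq> b^2"
  shows "p + r * a = p + a^2 * ((r * a - s * b) - b^2 * (r * inverse a - s * inverse b)) / (a^2 - b^2)"
proof -
  have "(r * a - s * b) - b^2 * (r * inverse a - s * inverse b) = r * (a^2 - b^2) / a"
    using a0 b0 by (simp add: field_simps power2_eq_square)
  then show ?thesis using a0 d by (simp add: power2_eq_square)
qed

definition F :: "complex \<Rightarrow> complex \<Rightarrow> complex \<Rightarrow> complex \<Rightarrow> complex" where
  "F a b p q = p + a^2 * ((q - p) - b^2 * cnj (q - p)) / (a^2 - b^2)"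

lemma real_of_cnj: "cnj r = r \<Longrightarrow> r = of_real (Re r)"
  by (simp add: complex_eq_iff)

lemma F_in_lines:
  assumes a: "cmod a = 1" and b: "cmod b = 1" and ab: "a^2 \<noteq> b^2"
  shows "F a b p q \<in> line a p" "F a b p q \<in> line b q"
proof -
  have a0: "a \<noteq> 0" and b0: "b \<noteq> 0" using a b by auto
  have ca: "cnj a = inverse a" and cb: "cnj b = inverse b" using a b unit_cnj by auto
  define w where "w = q - p"
  define r where "r = a * (w - b^2 * cnj w) / (a^2 - b^2)"
  have "cnj r = inverse a * (cnj w - inverse b ^ 2 * w) / (inverse a ^ 2 - inverse b ^ 2)"
    by (simp add: r_def ca cb)
  also have "\<dots> = r" unfolding r_def by (rule cnj_aux[OF a0 b0 ab])
  finally have r: "r = of_real (Re r)" by (rule real_of_cnj)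
  have "F a b p q = p + r * a"
    unfolding F_def F_eq_p[OF ab] r_def w_def by (simp add: mult.commute)
  then have "F a b p q = p + of_real (Re r) * a" using r by simp
  then show "F a b p q \<in> line a p" unfolding line_def by blast
  define s where "s = b * (w - a^2 * cnj w) / (a^2 - b^2)"
  have ba: "b^2 \<noteq> a^2" using ab by simp
  have "cnj s = inverse b * (cnj w - inverse a ^ 2 * w) / (inverse a ^ 2 - inverse b ^ 2)"
    by (simp add: s_def ca cb)
  also have "\<dots> = - (inverse b * (cnj w - inverse a ^ 2 * w) / (inverse b ^ 2 - inverse a ^ 2))"
    by (metis divide_minus_right minus_diff_eq)
  also have "\<dots> = - (b * (w - a^2 * cnj w) / (b^2 - a^2))" by (subst cnj_aux[OF b0 a0 ba]) simp
  also have "\<dots> = s" unfolding s_def by (metis divide_minus_right minus_diff_eq)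
  finally have s: "s = of_real (Re s)" by (rule real_of_cnj)
  have "F a b p q = q + s * b"
    unfolding F_def F_eq_q[OF ab] s_def w_def by (simp add: mult.commute)
  then have "F a b p q = q + of_real (Re s) * b" using s by simp
  then show "F a b p q \<in> line b q" unfolding line_def by blast
qed

lemma F_unique:
  assumes a: "cmod a = 1" and b: "cmod b = 1" and ab: "a^2 \<noteq> b^2"
    and z: "z \<in> line a p" "z \<in> line b q"
  shows "z = F a b p q"
proof -
  have a0: "a \<noteq> 0" and b0: "b \<noteq> 0" using a b by auto
  have ca: "cnj a = inverse a" and cb: "cnj b = inverse b" using a b unit_cnj by auto
  obtain r s where zr: "z = p + of_real r * a" and zs: "z = q + of_real s * b"
    using z unfolding line_def by blast
  have w: "q - p = of_real r * a - of_real s * b" using zr zs by (simp add: algebra_simps)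
  have cw: "cnj (q - p) = of_real r * inverse a - of_real s * inverse b"
    by (subst w) (simp add: ca cb)
  show ?thesis unfolding F_def cw unfolding w zr by (rule uniq_aux[OF a0 b0 ab])
qed


lemma lineI: "x = p + of_real r * u \<Longrightarrow> x \<in> line u p"
  unfolding line_def by blast

lemma line_shift: "z \<in> line u p \<Longrightarrow> z + t \<in> line u (p + t)"
  unfolding line_def by (auto simp: algebra_simps)

lemma line_negpt: "z \<in> line u p \<Longrightarrow> - z \<in> line u (- p)"
  unfolding line_def by (auto, metis minus_add_distrib mult_minus_left of_real_minus)

lemma line_scale: "z \<in> line u p \<Longrightarrow> of_real c * z \<in> line u (of_real c * p)"
  unfolding line_def by (auto, metis (no_types) distrib_left mult.assoc of_real_mult)

lemma line_rot: "z \<in> line u p \<Longrightarrow> w * z \<in> line (w * u) (w * p)"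
  unfolding line_def by (auto simp: algebra_simps)

lemma line_cnj: "z \<in> line u p \<Longrightarrow> cnj z \<in> line (cnj u) (cnj p)"
  unfolding line_def by auto

context
  fixes n :: nat assumes n3: "n \<ge> 3"
begin

private lemma n1_1: "n \<ge> 1" using n3 by simp

lemma R_F: "p \<in> Rset (U_n n) \<Longrightarrow> q \<in> Rset (U_n n) \<Longrightarrow> zeta n ^ j \<noteq> zeta n ^ k
   \<Longrightarrow> F (om n ^ j) (om n ^ k) p q \<in> Rset (U_n n)"
  by (rule R_inter[OF n1_1 _ _ _ F_in_lines(1) F_in_lines(2)]) (auto simp: om_pow_sq)

lemma zeta_ne: "j < n \<Longrightarrow> k < n \<Longrightarrow> j \<noteq> k \<Longrightarrow> zeta n ^ j \<noteq> zeta n ^ k"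
  using zeta_pow_eq_iff[OF n1_1] by simp

definition cc :: complex where "cc = of_real (cos (pi / real n))"

lemma cos_pos: "cos (pi / real n) > 0"
proof -
  have "pi / real n \<le> pi / 3" using n3 by (intro divide_left_mono) auto
  also have "\<dots> < pi / 2" by simp
  finally show ?thesis using n3 by (intro cos_gt_zero) auto
qed

lemma cc0: "cc \<noteq> 0" using cos_pos by (simp add: cc_def)

lemma om_cnj_sum: "om n + cnj (om n) = 2 * cc"
proof -
  have "om n = cis (pi / real n)" by (simp add: om_def cis_conv_exp)
  then show ?thesis unfolding cc_def by (simp add: complex_eq_iff)
qed

lemma om_cnj': "cnj (om n) = 2 * cc - om n" using om_cnj_sum by (simp add: algebra_simps)

lemma om_cnj: "cnj (om n) = inverse (om n)"
  using unit_cnj[of "om n"] norm_om_pow[of n 1] by simp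

lemma om0: "om n \<noteq> 0" by (simp add: om_def)

lemma om_last: "om n ^ (n - 1) = - cnj (om n)"
proof -
  have "om n ^ (n - 1) * om n = -1" using om_n[OF n1_1] n1_1
    by (metis Suc_diff_1 less_le_trans zero_less_one power_Suc2)
  then show ?thesis unfolding om_cnj using om0 by (simp add: field_simps)
qed

lemma R0: "0 \<in> Rset (U_n n)" by (rule Rset.zero)
lemma R1: "1 \<in> Rset (U_n n)" by (rule Rset.one)

lemma zne: "zeta n ^ 1 \<noteq> zeta n ^ (n - 1)" "zeta n ^ 0 \<noteq> zeta n ^ (n - 1)"
  "zeta n ^ 1 \<noteq> zeta n ^ 0" "zeta n ^ 2 \<noteq> zeta n ^ 1"
  by (rule zeta_ne; use n3 in auto)+

definition PP :: complex where "PP = om n / (2 * cc)"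

lemma RP: "PP \<in> Rset (U_n n)"
proof (rule R_inter[OF n1_1 R0 R1 zne(1)])
  show "PP \<in> line (om n ^ 1) 0"
    by (rule lineI[where r = "1 / (2 * cos (pi / real n))"]) (simp add: PP_def cc_def)
  show "PP \<in> line (om n ^ (n - 1)) 1"
    apply (rule lineI[where r = "1 / (2 * cos (pi / real n))"])
    unfolding om_last PP_def om_cnj' using cc0
    by (simp add: cc_def[symmetric] field_simps)
qed

lemma Rm1: "-1 \<in> Rset (U_n n)"
proof -
  have Q: "PP - 1 \<in> Rset (U_n n)"
  proof (rule R_inter[OF n1_1 RP R0 zne(2)])
    show "PP - 1 \<in> line (om n ^ 0) PP" by (rule lineI[where r = "-1"]) simp
    show "PP - 1 \<in> line (om n ^ (n - 1)) 0"
      apply (rule lineI[where r = "1 / (2 * cos (pi / real n))"])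
      unfolding om_last PP_def om_cnj' using cc0
      by (simp add: cc_def[symmetric] field_simps)
  qed
  show ?thesis
  proof (rule R_inter[OF n1_1 Q R0 zne(3)])
    show "-1 \<in> line (om n ^ 1) (PP - 1)"
      apply (rule lineI[where r = "- 1 / (2 * cos (pi / real n))"])
      unfolding PP_def om_last om_cnj' using cc0
      by (simp add: cc_def[symmetric] field_simps)
    show "-1 \<in> line (om n ^ 0) 0" by (rule lineI[where r = "-1"]) simp
  qed
qed

lemma R2: "2 \<in> Rset (U_n n)"
proof -
  have Q: "PP + 1 \<in> Rset (U_n n)"
  proof (rule R_inter[OF n1_1 RP R1, of 0 1])
    show "zeta n ^ 0 \<noteq> zeta n ^ 1" using zne(3) by metis
    show "PP + 1 \<in> line (om n ^ 0) PP" by (rule lineI[where r = "1"]) simp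
    show "PP + 1 \<in> line (om n ^ 1) 1"
      by (rule lineI[where r = "1 / (2 * cos (pi / real n))"]) (simp add: PP_def cc_def)
  qed
  show ?thesis
  proof (rule R_inter[OF n1_1 Q R0, of "n - 1" 0])
    show "zeta n ^ (n - 1) \<noteq> zeta n ^ 0" using zne(2) by metis
    show "2 \<in> line (om n ^ (n - 1)) (PP + 1)"
      apply (rule lineI[where r = "- 1 / (2 * cos (pi / real n))"])
      unfolding om_last PP_def om_cnj' using cc0
      by (simp add: cc_def[symmetric] field_simps)
    show "2 \<in> line (om n ^ 0) 0" by (rule lineI[where r = "2"]) simp
  qed
qed

lemma Rzeta: "zeta n \<in> Rset (U_n n)"
proof (rule R_inter[OF n1_1 R0 Rm1 zne(4)])
  show "zeta n \<in> line (om n ^ 2) 0" by (rule lineI[where r = 1]) (simp add: om_sq)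
  show "zeta n \<in> line (om n ^ 1) (-1)"
    apply (rule lineI[where r = "2 * cos (pi / real n)"])
  proof -
    have "om n * cnj (om n) = 1" using om_cnj om0 by simp
    then have "2 * cc * om n = 1 + om n ^ 2" unfolding om_cnj'
      by (simp add: algebra_simps power2_eq_square)
    then show "zeta n = - 1 + complex_of_real (2 * cos (pi / real n)) * om n ^ 1"
      unfolding om_sq[symmetric] by (simp add: cc_def)
  qed
qed

end


context
  fixes n :: nat assumes n3: "n \<ge> 3"
begin

private lemma n1_2: "n \<ge> 1" using n3 by simp

lemma R_shift:
  assumes t: "t \<in> Rset (U_n n)" and t1: "t + 1 \<in> Rset (U_n n)" and x: "x \<in> Rset (U_n n)"
  shows "x + t \<in> Rset (U_n n)"
proof (rule R_induct[OF x n1_2, where P = "\<lambda>x. x + t \<in> Rset (U_n n)"])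
  show "0 + t \<in> Rset (U_n n)" using t by simp
  show "1 + t \<in> Rset (U_n n)" using t1 by (simp add: add.commute)
  fix p q j k z assume "p + t \<in> Rset (U_n n)" "q + t \<in> Rset (U_n n)" "zeta n ^ j \<noteq> zeta n ^ k"
    "z \<in> line (om n ^ j) p" "z \<in> line (om n ^ k) q"
  then show "z + t \<in> Rset (U_n n)" by (rule R_inter[OF n1_2 _ _ _ line_shift line_shift])
qed

lemma R_neg:
  assumes x: "x \<in> Rset (U_n n)" shows "- x \<in> Rset (U_n n)"
proof (rule R_induct[OF x n1_2, where P = "\<lambda>x. - x \<in> Rset (U_n n)"])
  show "- 0 \<in> Rset (U_n n)" using Rset.zero by simp
  show "- 1 \<in> Rset (U_n n)" using Rm1[OF n3] .
  fix p q j k z assume "- p \<in> Rset (U_n n)" "- q \<in> Rset (U_n n)" "zeta n ^ j \<noteq> zeta n ^ k"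
    "z \<in> line (om n ^ j) p" "z \<in> line (om n ^ k) q"
  then show "- z \<in> Rset (U_n n)" by (rule R_inter[OF n1_2 _ _ _ line_negpt line_negpt])
qed

lemma R_add:
  assumes x: "x \<in> Rset (U_n n)" and y: "y \<in> Rset (U_n n)" shows "x + y \<in> Rset (U_n n)"
proof -
  have o: "1 + 1 \<in> Rset (U_n n)" using R2[OF n3] by simp
  have "\<And>z. z \<in> Rset (U_n n) \<Longrightarrow> z + 1 \<in> Rset (U_n n)"
    using R_shift[OF Rset.one o] by blast
  then show ?thesis using R_shift[OF y _ x] y by blast
qed

lemma R_diff: "x \<in> Rset (U_n n) \<Longrightarrow> y \<in> Rset (U_n n) \<Longrightarrow> x - y \<in> Rset (U_n n)"
  using R_add R_neg by (metis diff_conv_add_uminus)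

lemma R_scale:
  assumes t: "of_real c \<in> Rset (U_n n)" and x: "x \<in> Rset (U_n n)"
  shows "of_real c * x \<in> Rset (U_n n)"
proof (rule R_induct[OF x n1_2, where P = "\<lambda>x. of_real c * x \<in> Rset (U_n n)"])
  show "of_real c * 0 \<in> Rset (U_n n)" using Rset.zero by simp
  show "of_real c * 1 \<in> Rset (U_n n)" using t by simp
  fix p q j k z assume "of_real c * p \<in> Rset (U_n n)" "of_real c * q \<in> Rset (U_n n)" "zeta n ^ j \<noteq> zeta n ^ k"
    "z \<in> line (om n ^ j) p" "z \<in> line (om n ^ k) q"
  then show "of_real c * z \<in> Rset (U_n n)" by (rule R_inter[OF n1_2 _ _ _ line_scale line_scale])
qed

lemma R_rot:
  assumes x: "x \<in> Rset (U_n n)" shows "zeta n * x \<in> Rset (U_n n)"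
proof (rule R_induct[OF x n1_2, where P = "\<lambda>x. zeta n * x \<in> Rset (U_n n)"])
  show "zeta n * 0 \<in> Rset (U_n n)" using Rset.zero by simp
  show "zeta n * 1 \<in> Rset (U_n n)" using Rzeta[OF n3] by simp
  fix p q j k z assume a: "zeta n * p \<in> Rset (U_n n)" "zeta n * q \<in> Rset (U_n n)" "zeta n ^ j \<noteq> zeta n ^ k"
    "z \<in> line (om n ^ j) p" "z \<in> line (om n ^ k) q"
  have e: "zeta n * om n ^ i = om n ^ (i + 2)" for i by (metis om_sq power_add mult.commute)
  have z0: "zeta n \<noteq> 0" by (simp add: zeta_def)
  have ne: "zeta n ^ (j + 2) \<noteq> zeta n ^ (k + 2)" using a(3) z0 by (simp add: power_add)
  have l1: "zeta n * z \<in> line (om n ^ (j + 2)) (zeta n * p)" using line_rot[OF a(4), of "zeta n"] unfolding e .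
  have l2: "zeta n * z \<in> line (om n ^ (k + 2)) (zeta n * q)" using line_rot[OF a(5), of "zeta n"] unfolding e .
  show "zeta n * z \<in> Rset (U_n n)" by (rule R_inter[OF n1_2 a(1) a(2) ne l1 l2])
qed

lemma R_cnj:
  assumes x: "x \<in> Rset (U_n n)" shows "cnj x \<in> Rset (U_n n)"
proof (rule R_induct[OF x n1_2, where P = "\<lambda>x. cnj x \<in> Rset (U_n n)"])
  show "cnj 0 \<in> Rset (U_n n)" using Rset.zero by simp
  show "cnj 1 \<in> Rset (U_n n)" using Rset.one by simp
  fix p q j k z assume a: "cnj p \<in> Rset (U_n n)" "cnj q \<in> Rset (U_n n)" "zeta n ^ j \<noteq> zeta n ^ k"
    "z \<in> line (om n ^ j) p" "z \<in> line (om n ^ k) q" "j < n" "k < n"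
  have o2: "om n ^ (2 * n) = 1"
  proof -
    have "om n ^ (2 * n) = (om n ^ n) ^ 2" by (simp add: power_mult[symmetric] mult.commute)
    then show ?thesis using om_n[OF n1_2] by simp
  qed
  have e: "cnj (om n ^ i) = om n ^ (2 * n - i)" if "i < n" for i
  proof -
    have "om n ^ i * om n ^ (2 * n - i) = 1" using that o2 by (simp add: power_add[symmetric])
    then have "inverse (om n ^ i) = om n ^ (2 * n - i)" by (rule inverse_unique)
    then show ?thesis using unit_cnj[OF norm_om_pow] by simp
  qed
  have z2: "zeta n ^ (2 * n - i) = inverse (zeta n ^ i)" if "i < n" for i
  proof -
    have zn: "zeta n ^ n = 1" using zeta_pow_eq_1_iff[OF n1_2] by simp
    have "zeta n ^ (2 * n - i) * zeta n ^ i = zeta n ^ (2 * n)" using that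
      by (simp add: power_add[symmetric])
    also have "\<dots> = (zeta n ^ n) ^ 2" by (simp add: power_mult[symmetric] mult.commute)
    also have "\<dots> = 1" by (simp add: zn)
    finally have "zeta n ^ i * zeta n ^ (2 * n - i) = 1" by (simp add: mult.commute)
    then show ?thesis by (metis inverse_unique)
  qed
  have ne: "zeta n ^ (2 * n - j) \<noteq> zeta n ^ (2 * n - k)" using a(3,6,7) z2 by simp
  have l1: "cnj z \<in> line (om n ^ (2 * n - j)) (cnj p)" using line_cnj[OF a(4)] e[OF a(6)] by simp
  have l2: "cnj z \<in> line (om n ^ (2 * n - k)) (cnj q)" using line_cnj[OF a(5)] e[OF a(7)] by simp
  show "cnj z \<in> Rset (U_n n)" by (rule R_inter[OF n1_2 a(1) a(2) ne l1 l2])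
qed

definition MM :: "complex set" where "MM = {x. \<forall>y \<in> Rset (U_n n). x * y \<in> Rset (U_n n)}"

lemma M_R: "x \<in> MM \<Longrightarrow> x \<in> Rset (U_n n)"
proof -
  assume "x \<in> MM"
  then have "x * 1 \<in> Rset (U_n n)" unfolding MM_def using Rset.one by blast
  then show ?thesis by simp
qed
lemma M_mult: "x \<in> MM \<Longrightarrow> y \<in> MM \<Longrightarrow> x * y \<in> MM" unfolding MM_def by (simp add: mult.assoc)
lemma M_add: "x \<in> MM \<Longrightarrow> y \<in> MM \<Longrightarrow> x + y \<in> MM" unfolding MM_def by (simp add: distrib_right R_add)
lemma M_neg: "x \<in> MM \<Longrightarrow> - x \<in> MM" unfolding MM_def using R_neg by simp
lemma M_diff: "x \<in> MM \<Longrightarrow> y \<in> MM \<Longrightarrow> x - y \<in> MM" using M_add M_neg by (metis diff_conv_add_uminus)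
lemma M_one: "1 \<in> MM" unfolding MM_def by simp
lemma M_zero: "0 \<in> MM" unfolding MM_def using Rset.zero by simp
lemma M_zeta: "zeta n \<in> MM" unfolding MM_def using R_rot by simp
lemma M_real: "x \<in> Rset (U_n n) \<Longrightarrow> cnj x = x \<Longrightarrow> x \<in> MM"
proof -
  assume x: "x \<in> Rset (U_n n)" and c: "cnj x = x"
  have xr: "of_real (Re x) = x" using real_of_cnj[OF c] by metis
  have x': "of_real (Re x) \<in> Rset (U_n n)" unfolding xr by (rule x)
  show "x \<in> MM" unfolding MM_def mem_Collect_eq
  proof (intro ballI)
    fix y assume "y \<in> Rset (U_n n)"
    from R_scale[OF x' this] show "x * y \<in> Rset (U_n n)" unfolding xr .
  qed
qed
lemma M_pow: "x \<in> MM \<Longrightarrow> x ^ k \<in> MM" by (induction k) (auto intro: M_one M_mult)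
lemma M_prod: "(\<And>i. i \<in> A \<Longrightarrow> f i \<in> MM) \<Longrightarrow> prod f A \<in> MM"
  by (induction A rule: infinite_finite_induct) (auto intro: M_one M_mult)
lemma M_of_nat: "of_nat k \<in> MM" by (induction k) (auto intro: M_zero M_one M_add)

lemma subring_M:
  assumes G: "G \<subseteq> MM" and x: "x \<in> subring_gen G" shows "x \<in> MM"
  using x by induction (use G in \<open>auto intro: M_zero M_one M_add M_neg M_mult\<close>)

end


lemma sum_jx: "((x::complex) - 1) * (\<Sum>j<N. of_nat j * x^j) = of_nat N * x^N - x * (\<Sum>j<N. x^j)"
  by (induction N) (auto simp: algebra_simps)

lemma coprime_ex: "prime (n::nat) \<Longrightarrow> \<not> n dvd c \<Longrightarrow> gcd c n = 1"
  using coprime_commute coprime_imp_gcd_eq_1 prime_imp_coprime_nat by blast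

lemma S_sum: "(\<And>i. i \<in> A \<Longrightarrow> f i \<in> subring_gen G) \<Longrightarrow> sum f A \<in> subring_gen G"
  by (induction A rule: infinite_finite_induct) (auto intro: subring_gen.intros)
lemma S_pow: "x \<in> subring_gen G \<Longrightarrow> x ^ k \<in> subring_gen G"
  by (induction k) (auto intro: subring_gen.intros)
lemma S_of_nat: "of_nat k \<in> subring_gen G"
  by (induction k) (auto intro: subring_gen.intros)
lemma S_diff: "x \<in> subring_gen G \<Longrightarrow> y \<in> subring_gen G \<Longrightarrow> x - y \<in> subring_gen G"
  by (metis diff_conv_add_uminus subring_gen.add subring_gen.neg)
lemma S_cnj:
  assumes "\<And>g. g \<in> G \<Longrightarrow> cnj g \<in> subring_gen G" and "x \<in> subring_gen G"
  shows "cnj x \<in> subring_gen G"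
  using assms(2) by induction (auto intro: subring_gen.intros assms(1))

lemma zeta_n: "n \<ge> 1 \<Longrightarrow> zeta n ^ n = 1" using zeta_pow_eq_1_iff by simp

lemma norm_zeta: "cmod (zeta n) = 1" using norm_om_pow[of n 2] by (simp add: om_sq)

lemma zeta_cnj: "n \<ge> 1 \<Longrightarrow> cnj (zeta n) = zeta n ^ (n - 1)"
proof -
  assume n: "n \<ge> 1"
  have "zeta n * zeta n ^ (n - 1) = 1" using zeta_n[OF n] n
    by (metis Suc_diff_1 less_le_trans zero_less_one power_Suc)
  then have "inverse (zeta n) = zeta n ^ (n - 1)" by (rule inverse_unique)
  then show ?thesis using unit_cnj[OF norm_zeta] by simp
qed

lemma R_subset:
  assumes n3: "n \<ge> 3"
    and S1: "(1::complex) \<in> S" and S0: "(0::complex) \<in> S"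
    and Sadd: "\<And>x y. x \<in> S \<Longrightarrow> y \<in> S \<Longrightarrow> x + y \<in> S"
    and Sdiff: "\<And>x y. x \<in> S \<Longrightarrow> y \<in> S \<Longrightarrow> x - y \<in> S"
    and key: "\<And>c w k. zeta n ^ c \<noteq> 1 \<Longrightarrow> w \<in> S \<Longrightarrow> (w - zeta n ^ k * cnj w) / (1 - zeta n ^ c) \<in> S"
  shows "Rset (U_n n) \<subseteq> S"
proof
  have n1: "n \<ge> 1" using n3 by simp
  fix x assume "x \<in> Rset (U_n n)"
  then show "x \<in> S"
  proof (rule R_induct[OF _ n1])
    show "0 \<in> S" "1 \<in> S" by (fact S0, fact S1)
    fix p q j k z assume p: "p \<in> S" and q: "q \<in> S" and jk: "zeta n ^ j \<noteq> zeta n ^ k"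
      and zp: "z \<in> line (om n ^ j) p" and zq: "z \<in> line (om n ^ k) q"
    have sq: "(om n ^ j)^2 \<noteq> (om n ^ k)^2" using jk by (simp add: om_pow_sq)
    have z: "z = F (om n ^ j) (om n ^ k) p q" by (rule F_unique[OF norm_om_pow norm_om_pow sq zp zq])
    define c where "c = k + (n - 1) * j"
    have zj0: "zeta n ^ j \<noteq> 0" by (simp add: zeta_def)
    have "zeta n ^ c * zeta n ^ j = zeta n ^ k * (zeta n ^ (n - 1) * zeta n) ^ j"
      by (simp add: c_def power_add power_mult power_mult_distrib)
    also have "zeta n ^ (n - 1) * zeta n = 1" using zeta_n[OF n1] n1
      by (metis Suc_diff_1 less_le_trans zero_less_one power_Suc2)
    finally have zc: "zeta n ^ c = zeta n ^ k / zeta n ^ j" using zj0 by (simp add: field_simps)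
    have c1: "zeta n ^ c \<noteq> 1" using jk zj0 unfolding zc by (auto simp: field_simps)
    have d: "zeta n ^ j - zeta n ^ k \<noteq> 0" using jk by simp
    have "z = p + (q - p - zeta n ^ k * cnj (q - p)) / (1 - zeta n ^ c)"
      unfolding z F_def om_pow_sq zc using zj0 d by (simp add: field_simps)
    then show "z \<in> S" using key[OF c1 Sdiff[OF q p]] Sadd p by simp
  qed
qed


lemma S_gen: "g \<in> G \<Longrightarrow> g \<in> subring_gen G" by (rule subring_gen.gen)

lemma ideal_cnj:
  assumes n: "n \<ge> 1" and w: "w \<in> subring_gen {zeta n}"
  shows "\<exists>t \<in> subring_gen {zeta n}. w - cnj w = (1 - zeta n) * t"
  using w
proof induction
  case (gen x)
  then have x: "x = zeta n" by simp
  have "zeta n - zeta n ^ (n - 1) = (1 - zeta n ^ (n - 1)) - (1 - zeta n)" by simp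
  also have "\<dots> = (1 - zeta n) * ((\<Sum>i<n - 1. zeta n ^ i) - 1)"
    by (simp add: one_diff_power_eq algebra_simps)
  finally show ?case unfolding x zeta_cnj[OF n]
    by (intro bexI[of _ "(\<Sum>i<n - 1. zeta n ^ i) - 1"] S_diff S_sum S_pow subring_gen.one S_gen) auto
next
  case zero then show ?case by (intro bexI[of _ 0] subring_gen.zero) auto
next
  case one then show ?case by (intro bexI[of _ 0] subring_gen.zero) auto
next
  case (add x y)
  then obtain t1 t2 where "t1 \<in> subring_gen {zeta n}" "x - cnj x = (1 - zeta n) * t1"
    "t2 \<in> subring_gen {zeta n}" "y - cnj y = (1 - zeta n) * t2" by blast
  then show ?case by (intro bexI[of _ "t1 + t2"] subring_gen.add) (auto simp: algebra_simps)
next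
  case (neg x)
  then obtain t1 where "t1 \<in> subring_gen {zeta n}" "x - cnj x = (1 - zeta n) * t1" by blast
  then show ?case by (intro bexI[of _ "- t1"] subring_gen.neg) (auto simp: algebra_simps)
next
  case (mult x y)
  then obtain t1 t2 where t: "t1 \<in> subring_gen {zeta n}" "x - cnj x = (1 - zeta n) * t1"
    "t2 \<in> subring_gen {zeta n}" "y - cnj y = (1 - zeta n) * t2" by blast
  have cy: "cnj y \<in> subring_gen {zeta n}"
    by (rule S_cnj[OF _ mult.hyps(2)]) (simp add: zeta_cnj[OF n] S_pow S_gen)
  have "x * y - cnj (x * y) = x * (y - cnj y) + cnj y * (x - cnj x)" by (simp add: algebra_simps)
  also have "\<dots> = (1 - zeta n) * (x * t2 + cnj y * t1)" unfolding t(2,4) by (simp add: algebra_simps)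
  finally show ?case using t cy mult.hyps by (intro bexI[of _ "x * t2 + cnj y * t1"]) (auto intro: subring_gen.intros)
qed

lemma ideal_twist:
  assumes n: "n \<ge> 1" and w: "w \<in> subring_gen {zeta n}"
  shows "\<exists>t \<in> subring_gen {zeta n}. w - zeta n ^ k * cnj w = (1 - zeta n) * t"
proof -
  obtain t where t: "t \<in> subring_gen {zeta n}" "w - cnj w = (1 - zeta n) * t"
    using ideal_cnj[OF n w] by blast
  have cw: "cnj w \<in> subring_gen {zeta n}"
    by (rule S_cnj[OF _ w]) (simp add: zeta_cnj[OF n] S_pow S_gen)
  have "w - zeta n ^ k * cnj w = (w - cnj w) + (1 - zeta n ^ k) * cnj w" by (simp add: algebra_simps)
  also have "\<dots> = (1 - zeta n) * (t + (\<Sum>i<k. zeta n ^ i) * cnj w)"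
    unfolding t(2) one_diff_power_eq by (simp add: algebra_simps)
  finally have eq: "w - zeta n ^ k * cnj w = (1 - zeta n) * (t + (\<Sum>i<k. zeta n ^ i) * cnj w)" .
  moreover have "t + (\<Sum>i<k. zeta n ^ i) * cnj w \<in> subring_gen {zeta n}"
    by (intro subring_gen.add subring_gen.mult S_sum S_pow S_gen t(1) cw) auto
  ultimately show ?thesis by blast
qed

lemma prime_div:
  assumes p: "prime n" and c: "zeta n ^ c \<noteq> 1"
  shows "\<exists>t \<in> subring_gen {zeta n}. 1 - zeta n = (1 - zeta n ^ c) * t"
proof -
  have n: "n \<ge> 1" using p prime_ge_1_nat by blast
  have nc: "\<not> n dvd c" using c zeta_pow_eq_1_iff[OF n] by simp
  then have c0: "c \<noteq> 0" by (metis dvd_0_right)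
  obtain x y where xy: "c * x = n * y + gcd c n" using bezout_nat[OF c0] by blast
  then have xy: "c * x = n * y + 1" using coprime_ex[OF p nc] by simp
  have "(zeta n ^ c) ^ x = zeta n" unfolding power_mult[symmetric] xy
    by (simp add: power_add power_mult zeta_n[OF n])
  then have "1 - zeta n = (1 - zeta n ^ c) * (\<Sum>i<x. (zeta n ^ c) ^ i)"
    by (metis one_diff_power_eq)
  then show ?thesis by (intro bexI[of _ "\<Sum>i<x. (zeta n ^ c) ^ i"] S_sum S_pow S_gen) auto
qed

lemma R_sub_prime:
  assumes n3: "n \<ge> 3" and p: "prime n"
  shows "Rset (U_n n) \<subseteq> subring_gen {zeta n}"
proof (rule R_subset[OF n3])
  have n: "n \<ge> 1" using n3 by simp
  fix c w k assume c: "zeta n ^ c \<noteq> 1" and w: "w \<in> subring_gen {zeta n}"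
  obtain t where t: "t \<in> subring_gen {zeta n}" "w - zeta n ^ k * cnj w = (1 - zeta n) * t"
    using ideal_twist[OF n w] by blast
  obtain t' where t': "t' \<in> subring_gen {zeta n}" "1 - zeta n = (1 - zeta n ^ c) * t'"
    using prime_div[OF p c] by blast
  have "1 - zeta n ^ c \<noteq> 0" using c by simp
  then have "(w - zeta n ^ k * cnj w) / (1 - zeta n ^ c) = t' * t" unfolding t(2) t'(2) by simp
  then show "(w - zeta n ^ k * cnj w) / (1 - zeta n ^ c) \<in> subring_gen {zeta n}"
    using t t' by (auto intro: subring_gen.intros)
qed (auto intro: subring_gen.intros S_diff)

lemma R_sub_comp:
  assumes n3: "n \<ge> 3"
  shows "Rset (U_n n) \<subseteq> subring_gen {1 / of_nat n, zeta n}"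
proof (rule R_subset[OF n3])
  have n: "n \<ge> 1" using n3 by simp
  let ?S = "subring_gen {1 / of_nat n, zeta n}"
  fix c w k assume c: "zeta n ^ c \<noteq> 1" and w: "w \<in> ?S"
  define x where "x = zeta n ^ c"
  have x1: "x \<noteq> 1" using c x_def by simp
  have xn: "x ^ n = 1" unfolding x_def power_mult[symmetric] using zeta_n[OF n]
    by (simp add: power_mult mult.commute[of c n])
  have g: "(\<Sum>j<n. x^j) = 0" using power_diff_1_eq[of x n] xn x1 by simp
  have "(x - 1) * (\<Sum>j<n. of_nat j * x^j) = of_nat n" using sum_jx[of x n] xn g by simp
  then have inv: "1 / (1 - x) = - (1 / of_nat n) * (\<Sum>j<n. of_nat j * x^j)"
    using x1 n by (simp add: field_simps)
  have iS: "1 / (1 - x) \<in> ?S" unfolding inv unfolding x_def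
    by (intro subring_gen.mult subring_gen.neg S_gen S_sum S_of_nat S_pow) auto
  have cw: "cnj w \<in> ?S"
  proof (rule S_cnj[OF _ w])
    fix g assume g: "g \<in> {1 / of_nat n, zeta n}"
    have z: "zeta n ^ (n - 1) \<in> ?S" by (rule S_pow, rule S_gen) simp
    have o: "1 / of_nat n \<in> ?S" by (rule S_gen) simp
    show "cnj g \<in> ?S" using g z o by (auto simp: zeta_cnj[OF n])
  qed
  have "(w - zeta n ^ k * cnj w) / (1 - zeta n ^ c) = (w - zeta n ^ k * cnj w) * (1 / (1 - x))"
    unfolding x_def by simp
  moreover have "w - zeta n ^ k * cnj w \<in> ?S" by (intro S_diff subring_gen.mult S_pow S_gen w cw) auto
  ultimately show "(w - zeta n ^ k * cnj w) / (1 - zeta n ^ c) \<in> ?S"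
    using iS subring_gen.mult by metis
qed (auto intro: subring_gen.intros S_diff)


lemma roots_prod_gen:
  fixes Q :: "complex poly" and r :: "nat \<Rightarrow> complex"
  assumes fin: "finite I" and inj: "inj_on r I" and roots: "\<And>i. i \<in> I \<Longrightarrow> poly Q (r i) = 0"
    and deg: "degree Q \<le> card I" and lc: "coeff Q (card I) = 1"
  shows "poly Q x = (\<Prod>i\<in>I. x - r i)"
proof -
  define p where "p = (\<Prod>i\<in>I. [:- r i, 1:])"
  have dp: "degree p = card I" unfolding p_def
    by (subst degree_prod_sum_eq) (auto simp: fin)
  have lp: "lead_coeff p = 1" unfolding p_def lead_coeff_prod by simp
  have "p = Q"
  proof (rule poly_eqI_degree_lead_coeff[of p "card I" Q "r ` I"])
    show "coeff p (card I) = coeff Q (card I)" using lp dp lc by simp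
    show "card I \<le> card (r ` I)" using card_image[OF inj] by simp
    show "degree p \<le> card I" using dp by simp
    show "degree Q \<le> card I" by (fact deg)
    fix z assume "z \<in> r ` I"
    then obtain i where i: "i \<in> I" "z = r i" by auto
    have "poly p z = 0" unfolding p_def poly_prod using i fin
      by (intro prod_zero) auto
    then show "poly p z = poly Q z" using roots i by simp
  qed
  then show ?thesis unfolding p_def[symmetric] using poly_prod[of "\<lambda>i. [:- r i, 1:]" I x]
    by (simp add: p_def)
qed

lemma roots_unity_prod:
  fixes eta :: complex
  assumes d: "d \<ge> 1" and ed: "eta ^ d = 1" and inj: "inj_on (\<lambda>i. eta ^ i) {..<d}"
  shows "(\<Prod>i<d. x - eta ^ i) = x ^ d - 1"
proof -
  let ?Q = "monom 1 d - 1 :: complex poly"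
  have "poly ?Q x = (\<Prod>i\<in>{..<d}. x - eta ^ i)"
  proof (rule roots_prod_gen[OF _ inj])
    show "degree ?Q \<le> card {..<d}" by (simp add: degree_diff_le degree_monom_le)
    show "coeff ?Q (card {..<d}) = 1" using d by simp
    fix i show "poly ?Q (eta ^ i) = 0"
      by (simp add: poly_monom power_mult[symmetric] mult.commute[of i d] power_mult ed)
  qed simp
  then show ?thesis by (simp add: poly_monom)
qed

lemma roots_unity_prod1:
  fixes z :: complex
  assumes n: "n \<ge> 1" and zn: "z ^ n = 1" and inj: "inj_on (\<lambda>i. z ^ i) {..<n}"
  shows "(\<Prod>i\<in>{1..<n}. 1 - z ^ i) = of_nat n"
proof -
  let ?Q = "(\<Sum>i<n. monom 1 i) :: complex poly"
  have c: "card {1..<n} = n - 1" by simp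
  have "poly ?Q 1 = (\<Prod>i\<in>{1..<n}. 1 - z ^ i)"
  proof (rule roots_prod_gen)
    show "inj_on (\<lambda>i. z ^ i) {1..<n}" using inj by (rule inj_on_subset) auto
    show "degree ?Q \<le> card {1..<n}" unfolding c
      by (rule degree_le) (auto simp: coeff_sum)
    show "coeff ?Q (card {1..<n}) = 1" unfolding c using n by (simp add: coeff_sum)
    fix i assume i: "i \<in> {1..<n}"
    have z1: "z ^ i \<noteq> 1"
    proof
      assume "z ^ i = 1"
      then have "z ^ i = z ^ 0" by simp
      moreover have "i \<in> {..<n}" "0 \<in> {..<n}" using i by auto
      ultimately have "i = 0" using inj_onD[OF inj] by blast
      with i show False by simp
    qed
    have "(z ^ i) ^ n = 1" by (simp add: power_mult[symmetric] mult.commute[of i n] power_mult zn)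
    then have "(\<Sum>j<n. (z ^ i) ^ j) = 0" using power_diff_1_eq[of "z ^ i" n] z1 by simp
    then show "poly ?Q (z ^ i) = 0" by (simp add: poly_sum poly_monom)
  qed simp
  then show ?thesis by (simp add: poly_sum poly_monom)
qed


lemma gen_b: "(u::complex) \<noteq> 0 \<Longrightarrow> w \<noteq> 0 \<Longrightarrow> x / w - x / (u * w) = x * (u - 1) / (u * w)"
  by (simp add: field_simps)
lemma gen_d: "(u::complex) \<noteq> 0 \<Longrightarrow> v \<noteq> 0 \<Longrightarrow> y \<noteq> 0 \<Longrightarrow> x * (- x / u) / (y * (- y / v)) = v * (x * x) / (u * (y * y))"
  by (simp add: field_simps)
lemma gen_c: "(u::complex) \<noteq> 0 \<Longrightarrow> v \<noteq> 0 \<Longrightarrow> y \<noteq> 0 \<Longrightarrow> - x / (u * y) / (- y / v) = v * x / (u * (y * y))"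
  by (simp add: field_simps)
lemma key_alg:
  fixes u v :: complex
  assumes u0: "u \<noteq> 0" and v0: "v \<noteq> 0" and v1: "1 - v \<noteq> 0"
  shows "((1 - u) / (1 - v) - inverse v * ((- (1 - u) / u) / (- (1 - v) / v))) / (- (1 - v) / v)
     = (1 - u) * (- (1 - u) / u) / ((1 - v) * (- (1 - v) / v))"
proof -
  have a: "inverse v * ((- (1 - u) / u) / (- (1 - v) / v)) = (1 - u) / (u * (1 - v))"
    using u0 v0 v1 by (simp add: field_simps)
  have b: "(1 - u) / (1 - v) - (1 - u) / (u * (1 - v)) = - ((1 - u) * (1 - u)) / (u * (1 - v))"
    unfolding gen_b[OF u0 v1] by (simp add: algebra_simps)
  have c: "- ((1 - u) * (1 - u)) / (u * (1 - v)) / (- (1 - v) / v) = v * ((1 - u) * (1 - u)) / (u * ((1 - v) * (1 - v)))"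
    by (rule gen_c[OF u0 v0 v1])
  have d: "(1 - u) * (- (1 - u) / u) / ((1 - v) * (- (1 - v) / v)) = v * ((1 - u) * (1 - u)) / (u * ((1 - v) * (1 - v)))"
    by (rule gen_d[OF u0 v0 v1])
  show ?thesis unfolding a b c d ..
qed

context
  fixes n :: nat assumes n3: "n \<ge> 3"
begin

private lemma n1_3: "n \<ge> 1" using n3 by simp

lemma zeta0: "zeta n \<noteq> 0" by (simp add: zeta_def)

lemma cnj_zeta_pow: "cnj (zeta n ^ c) = zeta n ^ ((n - 1) * c)"
  by (simp add: zeta_cnj[OF n1_3] power_mult)

lemma inv_zeta_pow: "inverse (zeta n ^ c) = zeta n ^ ((n - 1) * c)"
proof -
  have "cnj (zeta n ^ c) = inverse (zeta n ^ c)"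
    by (rule unit_cnj) (simp add: norm_power norm_zeta)
  then show ?thesis using cnj_zeta_pow by simp
qed

lemma R_x:
  assumes c: "zeta n ^ c \<noteq> 1"
  shows "(1 - zeta n ^ e) / (1 - zeta n ^ c) \<in> Rset (U_n n)"
proof -
  define j where "j = e + (n - 1) * c"
  define u where "u = zeta n ^ e"
  define v where "v = zeta n ^ c"
  have u0: "u \<noteq> 0" and v0: "v \<noteq> 0" using zeta0 by (auto simp: u_def v_def)
  have v1: "1 - v \<noteq> 0" using c v_def by simp
  have zj: "zeta n ^ j = u * inverse v" by (simp add: j_def u_def v_def power_add inv_zeta_pow)
  have iv: "inverse v \<noteq> 1" using c v_def by (metis inverse_1 inverse_inverse_eq)
  have d: "u * inverse v - u \<noteq> 0"
  proof
    assume "u * inverse v - u = 0"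
    then have "u * (inverse v - 1) = 0" by (simp add: algebra_simps)
    then show False using u0 iv by simp
  qed
  have ne: "zeta n ^ j \<noteq> zeta n ^ e" using d zj u_def by simp
  have "F (om n ^ j) (om n ^ e) 0 1 \<in> Rset (U_n n)" by (rule R_F[OF n3 Rset.zero Rset.one ne])
  moreover have "F (om n ^ j) (om n ^ e) 0 1 = (1 - u) / (1 - v)"
    unfolding F_def om_pow_sq zj u_def[symmetric] using d u0 v0 v1
    by (simp add: field_simps)
  ultimately show ?thesis by (simp add: u_def v_def)
qed

lemma R_rho:
  assumes y: "y \<in> Rset (U_n n)" and k: "zeta n ^ k \<noteq> 1"
  shows "(y - zeta n ^ k * cnj y) / (1 - zeta n ^ k) \<in> Rset (U_n n)"
proof -
  have ne: "zeta n ^ 0 \<noteq> zeta n ^ k" using k by simp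
  have "F (om n ^ 0) (om n ^ k) 0 y \<in> Rset (U_n n)" by (rule R_F[OF n3 Rset.zero y ne])
  then show ?thesis unfolding F_def om_pow_sq by simp
qed

definition AA :: "nat \<Rightarrow> complex" where "AA e = (1 - zeta n ^ e) * cnj (1 - zeta n ^ e)"

lemma AA_M: "AA e \<in> MM n"
  unfolding AA_def complex_cnj_diff complex_cnj_one cnj_zeta_pow
  by (intro M_mult M_diff M_one M_pow M_zeta n3)

lemma AA0: "zeta n ^ e \<noteq> 1 \<Longrightarrow> AA e \<noteq> 0"
proof -
  assume "zeta n ^ e \<noteq> 1"
  then have "1 - zeta n ^ e \<noteq> 0" by simp
  then show ?thesis unfolding AA_def by (metis complex_cnj_zero_iff mult_eq_0_iff)
qed

lemma AA_ratio:
  assumes c: "zeta n ^ c \<noteq> 1"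
  shows "AA e / AA c \<in> MM n"
proof -
  define u where "u = zeta n ^ e"
  define v where "v = zeta n ^ c"
  have u0: "u \<noteq> 0" and v0: "v \<noteq> 0" using zeta0 by (auto simp: u_def v_def)
  have v1: "1 - v \<noteq> 0" using c v_def by simp
  have iv: "1 - inverse v \<noteq> 0" using c v_def by (metis inverse_1 inverse_inverse_eq right_minus_eq)
  have cu: "cnj u = inverse u" and cv: "cnj v = inverse v"
    unfolding u_def v_def by (rule unit_cnj, simp add: norm_power norm_zeta)+
  define y where "y = (1 - u) / (1 - v)"
  have y: "y \<in> Rset (U_n n)" unfolding y_def u_def v_def by (rule R_x[OF c])
  define k where "k = (n - 1) * c"
  have zk: "zeta n ^ k = inverse v" by (simp add: k_def v_def inv_zeta_pow)
  have k1: "zeta n ^ k \<noteq> 1" using zk iv by simp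
  have rho: "(y - zeta n ^ k * cnj y) / (1 - zeta n ^ k) \<in> Rset (U_n n)" by (rule R_rho[OF y k1])
  have e1: "1 - inverse u = - (1 - u) / u" using u0 by (simp add: field_simps)
  have e2: "1 - inverse v = - (1 - v) / v" using v0 by (simp add: field_simps)
  have "(y - zeta n ^ k * cnj y) / (1 - zeta n ^ k) = (1 - u) * (1 - inverse u) / ((1 - v) * (1 - inverse v))"
    unfolding zk y_def complex_cnj_divide complex_cnj_diff complex_cnj_one cu cv e1 e2
    by (rule key_alg[OF u0 v0 v1])
  also have "\<dots> = AA e / AA c" unfolding AA_def u_def[symmetric] v_def[symmetric] by (simp add: cu cv)
  finally have r: "AA e / AA c \<in> Rset (U_n n)" using rho by simp
  have "cnj (AA e / AA c) = AA e / AA c" unfolding AA_def by (simp add: mult.commute)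
  then show ?thesis by (rule M_real[OF n3 r])
qed

lemma dist_prod:
  assumes dn: "d * m = n" and d1: "d \<ge> 1"
  shows "(\<Prod>i<d. 1 - zeta n ^ (1 + i * m)) = 1 - zeta n ^ d"
proof -
  define eta where "eta = zeta n ^ m"
  have m1: "m \<ge> 1" using dn n1_3 by (cases m) auto
  have ed: "eta ^ d = 1" unfolding eta_def power_mult[symmetric] using dn zeta_n[OF n1_3]
    by (simp add: mult.commute)
  have inj: "inj_on (\<lambda>i. eta ^ i) {..<d}"
  proof (rule inj_onI)
    fix i j assume i: "i \<in> {..<d}" and j: "j \<in> {..<d}" and e: "eta ^ i = eta ^ j"
    then have "zeta n ^ (m * i) = zeta n ^ (m * j)" by (simp add: eta_def power_mult)
    then have "(m * i) mod n = (m * j) mod n" using zeta_pow_eq_iff[OF n1_3] by simp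
    moreover have "m * i < n" "m * j < n" using i j dn m1 by (auto simp: mult.commute)
    ultimately have "m * i = m * j" by simp
    then show "i = j" using m1 by simp
  qed
  have P: "(\<Prod>i<d. inverse (zeta n) - eta ^ i) = inverse (zeta n) ^ d - 1"
    by (rule roots_unity_prod[OF d1 ed inj])
  have ei: "eta ^ i = zeta n ^ (i * m)" for i by (simp add: eta_def power_mult[symmetric] mult.commute)
  have "(\<Prod>i<d. 1 - zeta n ^ (1 + i * m)) = (\<Prod>i<d. zeta n * (inverse (zeta n) - eta ^ i))"
    by (rule prod.cong) (auto simp: ei zeta0 field_simps power_add)
  also have "\<dots> = zeta n ^ d * (\<Prod>i<d. inverse (zeta n) - eta ^ i)"
    by (simp add: prod.distrib)
  also have "\<dots> = 1 - zeta n ^ d" unfolding P using zeta0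
    by (simp add: field_simps power_inverse)
  finally show ?thesis .
qed

lemma full_prod: "(\<Prod>c\<in>{1..<n}. 1 - zeta n ^ c) = of_nat n"
proof (rule roots_unity_prod1[OF n1_3 zeta_n[OF n1_3]])
  show "inj_on (\<lambda>i. zeta n ^ i) {..<n}"
    by (rule inj_onI) (auto simp: zeta_pow_eq_iff[OF n1_3])
qed

lemma AA_prod: "prod AA A = (\<Prod>c\<in>A. 1 - zeta n ^ c) * cnj (\<Prod>c\<in>A. 1 - zeta n ^ c)"
  unfolding AA_def by (simp add: prod.distrib)

lemma inv_n_M:
  assumes np: "\<not> prime n"
  shows "1 / of_nat n \<in> MM n"
proof -
  obtain d where d: "d dvd n" "d \<noteq> 1" "d \<noteq> n"
    using np n1_3 prime_nat_iff by (metis le_numeral_extra(4) less_le_trans linorder_not_le nat_less_le one_less_numeral_iff semiring_norm(77) n3)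
  obtain m where dm: "d * m = n" using d(1) by (metis dvd_def)
  have d0: "d \<noteq> 0" using dm n1_3 by auto
  have d2: "d \<ge> 2" using d0 d(2) by simp
  have dn: "d < n" using d(3) dvd_imp_le[OF d(1)] n1_3 by simp
  have zd: "zeta n ^ d \<noteq> 1" using zeta_pow_eq_1_iff[OF n1_3] dn d0 by (auto dest: dvd_imp_le)
  have z1: "zeta n ^ 1 \<noteq> 1" using zeta_pow_eq_1_iff[OF n1_3, of 1] n3 by auto
  define a where "a = AA 1"
  have a0: "a \<noteq> 0" unfolding a_def using AA0[OF z1] .
  have Ad0: "AA d \<noteq> 0" using AA0[OF zd] .
  have AD: "AA d = (\<Prod>i<d. AA (1 + i * m))"
  proof -
    have "(\<Prod>i<d. AA (1 + i * m)) = (\<Prod>i<d. 1 - zeta n ^ (1 + i * m)) * cnj (\<Prod>i<d. 1 - zeta n ^ (1 + i * m))"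
      unfolding AA_def prod.distrib by (simp only: cnj_prod)
    also have "\<dots> = AA d" using dist_prod[OF dm] d0 by (simp only: AA_def)
    finally show ?thesis by simp
  qed
  have P: "(\<Prod>i<d. AA (1 + i * m) / a) \<in> MM n"
    unfolding a_def by (rule M_prod[OF n3], rule AA_ratio[OF z1])
  have Pe: "(\<Prod>i<d. AA (1 + i * m) / a) = AA d / a ^ d"
    by (simp add: prod_dividef AD)
  have Q: "a / AA d \<in> MM n" unfolding a_def by (rule AA_ratio[OF zd])
  have "AA d / a ^ d * (a / AA d) \<in> MM n" using M_mult[OF n3 P[unfolded Pe] Q] .
  moreover have "AA d / a ^ d * (a / AA d) = 1 / a ^ (d - 1)" using a0 Ad0 d0
    by (cases d) (auto simp: field_simps)
  ultimately have "1 / a ^ (d - 1) \<in> MM n" by simp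
  then have "a ^ (d - 2) * (1 / a ^ (d - 1)) \<in> MM n"
    by (intro M_mult[OF n3] M_pow[OF n3] AA_M[unfolded a_def[symmetric]] ) (simp add: a_def AA_M)
  moreover have "a ^ (d - 2) * (1 / a ^ (d - 1)) = 1 / a" using a0 d2
    by (cases d; cases "d - 1") (auto simp: field_simps)
  ultimately have ia: "1 / a \<in> MM n" by simp
  have "(\<Prod>c\<in>{1..<n}. (a / AA c) * (1 / a)) \<in> MM n"
  proof (rule M_prod[OF n3])
    fix c assume c: "c \<in> {1..<n}"
    then have "zeta n ^ c \<noteq> 1" using zeta_pow_eq_1_iff[OF n1_3] by (auto dest: dvd_imp_le)
    then show "a / AA c * (1 / a) \<in> MM n" unfolding a_def
      by (intro M_mult[OF n3] AA_ratio ia[unfolded a_def])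
  qed
  moreover have "(\<Prod>c\<in>{1..<n}. (a / AA c) * (1 / a)) = 1 / (of_nat n * of_nat n)"
  proof -
    have "(\<Prod>c\<in>{1..<n}. (a / AA c) * (1 / a)) = (\<Prod>c\<in>{1..<n}. 1 / AA c)"
      using a0 by (intro prod.cong) auto
    also have "\<dots> = 1 / prod AA {1..<n}" by (simp add: prod_dividef)
    also have "prod AA {1..<n} = of_nat n * of_nat n" unfolding AA_prod full_prod by simp
    finally show ?thesis .
  qed
  ultimately have "1 / (of_nat n * of_nat n) \<in> MM n" by simp
  then have "of_nat n * (1 / (of_nat n * of_nat n)) \<in> MM n" by (intro M_mult[OF n3] M_of_nat[OF n3])
  then show ?thesis using n1_3 by simp
qed

end

theorem theorem2:
  fixes n :: nat
  assumes "n \<ge> 3"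
  shows "(prime n \<longrightarrow> Rset (U_n n) = subring_gen {zeta n})
       \<and> (\<not> prime n \<longrightarrow> Rset (U_n n) = subring_gen {1 / of_nat n, zeta n})"
proof (intro conjI impI)
  assume p: "prime n"
  show "Rset (U_n n) = subring_gen {zeta n}"
  proof
    show "Rset (U_n n) \<subseteq> subring_gen {zeta n}" by (rule R_sub_prime[OF assms p])
    have G: "{zeta n} \<subseteq> MM n" using M_zeta[OF assms] by simp
    show "subring_gen {zeta n} \<subseteq> Rset (U_n n)"
      using subring_M[OF assms G] M_R[OF assms] by blast
  qed
next
  assume np: "\<not> prime n"
  show "Rset (U_n n) = subring_gen {1 / of_nat n, zeta n}"
  proof
    show "Rset (U_n n) \<subseteq> subring_gen {1 / of_nat n, zeta n}" by (rule R_sub_comp[OF assms])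
    have G: "{1 / of_nat n, zeta n} \<subseteq> MM n" using M_zeta[OF assms] inv_n_M[OF assms np] by simp
    show "subring_gen {1 / of_nat n, zeta n} \<subseteq> Rset (U_n n)"
      using subring_M[OF assms G] M_R[OF assms] by blast
  qed
qed

end
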